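(* Let $k\ge1$, $f\in P_k$ and $t\in[0,h(f)]$. For $1\le i\le k$, we have $t_i\neq0$ if and only if there exists $r\in\mathbb{R}$ such that $|\{j\in\{0,\dots,k\}:\phi_f(t)_j>r\}|=i$. Moreover, if $r\in\mathbb{R}$ satisfies $|\{j:\phi_f(t)_j>r\}|=i$ and $g:\{0,\dots,k\}\to\{0,\dots,k\}$ is defined by $g(j)=i$ if $\phi_f(t)_j\le r$ and $g(j)=0$ if $\phi_f(t)_j>r$, then $g\in P_k$, $h(g)=e_i$ and $g\le f$.
   Context: A $k$-placing is a function $f:\{0,\dots,k\}\to\{0,\dots,k\}$ with $f(j)=|\{i:f(i)<f(j)\}|$ for all $j$; $P_k$ is the set of $k$-placings with pointwise order. The height $h:P_k\to\mathbb{N}^k$ is $h(f)_i=1$ if $f^{-1}(i)\ne\emptyset$, else $0$ ($1\le i\le k$); $e_1,\dots,e_k$ are the generators of $\mathbb{N}^k$ and $[0,m]=\{t\in\mathbb{R}^k:0\le t\le m\}$. Let $\varepsilon_0,\dots,\varepsilon_k$ be the standard basis of $\mathbb{R}^{k+1}$, $v_0=\frac1{k+1}\sum_{i=0}^k\varepsilon_i$, and for $f\in P_k$, $n\in\operatorname{range}(f)\setminus\{0\}$, $v_{f,n}=\frac1n\sum_{j: f(j)<n}\varepsilon_j$. Define $\phi_f:[0,h(f)]\to\mathbb{R}^{k+1}$ by $\phi_f(0)=v_0$ and, for $t\ne0$, $\phi_f(t)=(1-\|t\|_\infty)v_0+\frac{\|t\|_\infty}{\|t\|_1}\sum_{n\in\operatorname{range}(f)\setminus\{0\}}t_nv_{f,n}$.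 *)

theory Defs
  imports Complex_Main
begin

text \<open>Functions on {0..k} are represented as nat => nat; only the values at
  indices j <= k matter.  Vectors in N^k / R^k are nat => _, indexed by 1..k;
  vectors in R^(k+1) are nat => real, indexed by 0..k.\<close>

definition is_placing :: "nat \<Rightarrow> (nat \<Rightarrow> nat) \<Rightarrow> bool" where
  "is_placing k f \<longleftrightarrow>
     (\<forall>j\<le>k. f j \<le> k \<and> f j = card {i. i \<le> k \<and> f i < f j})"

definition placing_le :: "nat \<Rightarrow> (nat \<Rightarrow> nat) \<Rightarrow> (nat \<Rightarrow> nat) \<Rightarrow> bool" where
  "placing_le k g f \<longleftrightarrow> (\<forall>j\<le>k. g j \<le> f j)"

definition height :: "nat \<Rightarrow> (nat \<Rightarrow> nat) \<Rightarrow> nat \<Rightarrow> nat" where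
  "height k f i = (if \<exists>j\<le>k. f j = i then 1 else 0)"

definition in_box :: "nat \<Rightarrow> (nat \<Rightarrow> nat) \<Rightarrow> (nat \<Rightarrow> real) \<Rightarrow> bool" where
  "in_box k m t \<longleftrightarrow> (\<forall>i\<in>{1..k}. 0 \<le> t i \<and> t i \<le> real (m i))"

definition norm_inf :: "nat \<Rightarrow> (nat \<Rightarrow> real) \<Rightarrow> real" where
  "norm_inf k t = Max ((\<lambda>i. \<bar>t i\<bar>) ` {1..k})"

definition norm_one :: "nat \<Rightarrow> (nat \<Rightarrow> real) \<Rightarrow> real" where
  "norm_one k t = (\<Sum>i=1..k. \<bar>t i\<bar>)"

definition v0 :: "nat \<Rightarrow> nat \<Rightarrow> real" where
  "v0 k j = 1 / real (k + 1)"

definition vfn :: "(nat \<Rightarrow> nat) \<Rightarrow> nat \<Rightarrow> nat \<Rightarrow> real" where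
  "vfn f n j = (if f j < n then 1 / real n else 0)"

definition phi :: "nat \<Rightarrow> (nat \<Rightarrow> nat) \<Rightarrow> (nat \<Rightarrow> real) \<Rightarrow> nat \<Rightarrow> real" where
  "phi k f t j =
     (if (\<forall>i\<in>{1..k}. t i = 0) then v0 k j
      else (1 - norm_inf k t) * v0 k j
           + (norm_inf k t / norm_one k t) *
             (\<Sum>n\<in>f ` {0..k} - {0}. t n * vfn f n j))"

end

theory Submission
  imports Defs
begin

definition FF :: "nat \<Rightarrow> (nat \<Rightarrow> nat) \<Rightarrow> (nat \<Rightarrow> real) \<Rightarrow> nat \<Rightarrow> real" where
  "FF k f t m = (\<Sum>n\<in>f ` {0..k} - {0}. t n * (if m < n then 1 / real n else 0))"

lemma phi_eq:
  "\<not> (\<forall>i\<in>{1..k}. t i = 0) \<Longrightarrow> phi k f t j =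
     (1 - norm_inf k t) * v0 k j + (norm_inf k t / norm_one k t) * FF k f t (f j)"
  unfolding phi_def FF_def vfn_def by (simp only: if_False)

lemma FF_mono:
  assumes nn: "\<forall>n\<in>f ` {0..k} - {0}. 0 \<le> t n" and ab: "a \<le> b"
  shows "FF k f t b \<le> FF k f t a"
  unfolding FF_def
proof (rule sum_mono)
  fix n assume "n \<in> f ` {0..k} - {0}"
  with nn have "0 \<le> t n" by blast
  then show "t n * (if b < n then 1 / real n else 0) \<le> t n * (if a < n then 1 / real n else 0)"
    using ab by (auto intro: mult_left_mono)
qed

lemma FF_strict:
  assumes nn: "\<forall>n\<in>f ` {0..k} - {0}. 0 \<le> t n" and ab: "a < b"
    and b: "b \<in> f ` {0..k} - {0}"
  shows "FF k f t b + t b / real b \<le> FF k f t a"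
proof -
  let ?R = "f ` {0..k} - {0}"
  let ?d = "\<lambda>n. t n * (if a < n then 1 / real n else 0) - t n * (if b < n then 1 / real n else 0)"
  have "FF k f t a - FF k f t b = sum ?d ?R"
    unfolding FF_def by (simp add: sum_subtractf)
  moreover have "?d b \<le> sum ?d ?R"
  proof (rule member_le_sum)
    show "b \<in> ?R" by fact
    show "finite ?R" by simp
    fix x assume "x \<in> ?R - {b}"
    with nn have "0 \<le> t x" by blast
    then show "0 \<le> ?d x" using ab
      by (auto simp: mult_left_mono)
  qed
  moreover have "?d b = t b / real b" using ab by simp
  ultimately show ?thesis by linarith
qed

lemma FF_eq:
  assumes tb: "t b = 0" and gap: "\<forall>n\<in>f ` {0..k} - {0}. \<not> (a < n \<and> n < b)" and ab: "a < b"
  shows "FF k f t a = FF k f t b"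
  unfolding FF_def
proof (rule sum.cong)
  fix n assume "n \<in> f ` {0..k} - {0}"
  with gap have "\<not> (a < n \<and> n < b)" by blast
  then show "t n * (if a < n then 1 / real n else 0) = t n * (if b < n then 1 / real n else 0)"
    using tb ab by (cases "n = b") auto
qed simp

theorem lemma5p9:
  fixes k :: nat and f :: "nat \<Rightarrow> nat" and t :: "nat \<Rightarrow> real"
  assumes "k \<ge> 1" and "is_placing k f" and "in_box k (height k f) t"
  shows "\<forall>i\<in>{1..k}.
           (t i \<noteq> 0 \<longleftrightarrow>
              (\<exists>r::real. card {j. j \<le> k \<and> phi k f t j > r} = i))
         \<and> (\<forall>(r::real) (g::nat \<Rightarrow> nat).
              card {j. j \<le> k \<and> phi k f t j > r} = i \<longrightarrow>
              (\<forall>j\<le>k. g j = (if phi k f t j \<le> r then i else 0)) \<longrightarrow>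
              is_placing k g \<and>
              (\<forall>l\<in>{1..k}. height k g l = (if l = i then 1 else 0)) \<and>
              placing_le k g f)"
proof (intro ballI conjI allI impI)
  fix i assume i: "i \<in> {1..k}"
  define P where "P = phi k f t"
  define R where "R = f ` {0..k} - {0}"
  have pl: "\<And>j. j \<le> k \<Longrightarrow> f j \<le> k \<and> f j = card {i. i \<le> k \<and> f i < f j}"
    using assms(2) unfolding is_placing_def by blast
  have box: "\<And>n. n \<in> {1..k} \<Longrightarrow> 0 \<le> t n \<and> t n \<le> real (height k f n)"
    using assms(3) unfolding in_box_def by blast
  have nn: "\<forall>n\<in>R. 0 \<le> t n"
  proof
    fix n assume "n \<in> R"
    then obtain j where "j \<le> k" "n = f j" "n \<noteq> 0" unfolding R_def by auto
    with pl[of j] have "n \<in> {1..k}" by auto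
    then show "0 \<le> t n" using box by blast
  qed
  have Bnn: "0 \<le> norm_inf k t / norm_one k t"
  proof -
    have "0 \<le> norm_inf k t"
    proof -
      have "\<bar>t 1\<bar> \<le> norm_inf k t" unfolding norm_inf_def
        using assms(1) by (intro Max_ge) auto
      then show ?thesis by linarith
    qed
    moreover have "0 \<le> norm_one k t" unfolding norm_one_def by (rule sum_nonneg) auto
    ultimately show ?thesis by simp
  qed
  have M: "\<And>j j'. f j \<le> f j' \<Longrightarrow> P j' \<le> P j"
  proof -
    fix j j' assume le: "f j \<le> f j'"
    show "P j' \<le> P j"
    proof (cases "\<forall>i\<in>{1..k}. t i = 0")
      case True then show ?thesis by (simp add: P_def phi_def v0_def)
    next
      case False
      have "FF k f t (f j') \<le> FF k f t (f j)" using FF_mono[OF nn[unfolded R_def] le] .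
      then have "(norm_inf k t / norm_one k t) * FF k f t (f j') \<le> (norm_inf k t / norm_one k t) * FF k f t (f j)"
        using Bnn by (rule mult_left_mono)
      then show ?thesis unfolding P_def phi_eq[OF False] by (simp add: v0_def)
    qed
  qed
  have K: "\<And>r. card {j. j \<le> k \<and> P j > r} = i \<Longrightarrow>
      \<exists>j1. j1 \<le> k \<and> \<not> P j1 > r \<and> f j1 = i \<and> {j. j \<le> k \<and> P j > r} = {j. j \<le> k \<and> f j < i}"
  proof -
    fix r assume c: "card {j. j \<le> k \<and> P j > r} = i"
    let ?X = "{j. j \<le> k \<and> P j > r}"
    have "{..k} - ?X \<noteq> {}"
    proof
      assume "{..k} - ?X = {}"
      then have "{..k} \<subseteq> ?X" by blast
      then have "card {..k} \<le> card ?X" by (intro card_mono) auto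
      then show False using c i by simp
    qed
    then have ne: "f ` ({..k} - ?X) \<noteq> {}" by blast
    define m where "m = Min (f ` ({..k} - ?X))"
    have "m \<in> f ` ({..k} - ?X)" unfolding m_def using ne by (intro Min_in) auto
    then obtain j1 where j1: "j1 \<in> {..k} - ?X" "f j1 = m" by blast
    have Xeq: "?X = {j. j \<le> k \<and> f j < f j1}"
    proof (intro set_eqI iffI)
      fix j assume "j \<in> ?X"
      moreover have "\<not> f j1 \<le> f j"
      proof
        assume "f j1 \<le> f j"
        then have "P j \<le> P j1" by (rule M)
        then show False using j1 \<open>j \<in> ?X\<close> by auto
      qed
      ultimately show "j \<in> {j. j \<le> k \<and> f j < f j1}" by auto
    next
      fix j assume j: "j \<in> {j. j \<le> k \<and> f j < f j1}"
      show "j \<in> ?X"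
      proof (rule ccontr)
        assume "j \<notin> ?X"
        then have "m \<le> f j" unfolding m_def using j by (intro Min_le) auto
        then show False using j j1 by auto
      qed
    qed
    have "f j1 = i" using c pl[of j1] j1 Xeq by auto
    then show "\<exists>j1. j1 \<le> k \<and> \<not> P j1 > r \<and> f j1 = i \<and> ?X = {j. j \<le> k \<and> f j < i}"
      using j1 Xeq by auto
  qed
  {
    assume ti: "t i \<noteq> 0"
    have "height k f i \<noteq> 0" using box[OF i] ti by auto
    then obtain j1 where j1: "j1 \<le> k" "f j1 = i" unfolding height_def by (auto split: if_splits)
    have notZ: "\<not> (\<forall>i\<in>{1..k}. t i = 0)" using i ti by blast
    have tpos: "0 < t i" using box[OF i] ti by auto
    have Bpos: "0 < norm_inf k t / norm_one k t"
    proof -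
      have "\<bar>t i\<bar> \<le> norm_inf k t" unfolding norm_inf_def
        using i by (intro Max_ge) auto
      moreover have "\<bar>t i\<bar> \<le> norm_one k t" unfolding norm_one_def
        using i by (intro member_le_sum) auto
      ultimately show ?thesis using tpos by simp
    qed
    have iR: "i \<in> R" unfolding R_def using j1 i by auto
    have S: "\<And>j. f j < i \<Longrightarrow> P j1 < P j"
    proof -
      fix j assume "f j < i"
      have "FF k f t i + t i / real i \<le> FF k f t (f j)"
        using FF_strict[OF nn[unfolded R_def] \<open>f j < i\<close> iR[unfolded R_def]] .
      moreover have "0 < t i / real i" using tpos i by simp
      ultimately have "FF k f t i < FF k f t (f j)" by linarith
      then have "(norm_inf k t / norm_one k t) * FF k f t i < (norm_inf k t / norm_one k t) * FF k f t (f j)"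
        using Bpos by (rule mult_strict_left_mono)
      then show "P j1 < P j" unfolding P_def phi_eq[OF notZ] using j1 by (simp add: v0_def)
    qed
    have "{j. j \<le> k \<and> P j > P j1} = {j. j \<le> k \<and> f j < f j1}"
    proof (intro set_eqI iffI)
      fix j assume "j \<in> {j. j \<le> k \<and> P j > P j1}"
      moreover have "\<not> f j1 \<le> f j"
      proof
        assume "f j1 \<le> f j" then have "P j \<le> P j1" by (rule M)
        then show False using \<open>j \<in> _\<close> by auto
      qed
      ultimately show "j \<in> {j. j \<le> k \<and> f j < f j1}" by auto
    next
      fix j assume "j \<in> {j. j \<le> k \<and> f j < f j1}"
      then show "j \<in> {j. j \<le> k \<and> P j > P j1}" using S j1 by auto
    qed
    then have "card {j. j \<le> k \<and> P j > P j1} = i" using pl[OF j1(1)] j1 by simp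
    then have "\<exists>r::real. card {j. j \<le> k \<and> phi k f t j > r} = i"
      unfolding P_def by blast
  }
  note fwd = this
  {
    assume "\<exists>r::real. card {j. j \<le> k \<and> phi k f t j > r} = i"
    then obtain r where c: "card {j. j \<le> k \<and> P j > r} = i" unfolding P_def by blast
    from K[OF c] obtain j1 where j1: "j1 \<le> k" "\<not> P j1 > r" "f j1 = i"
      and Xeq: "{j. j \<le> k \<and> P j > r} = {j. j \<le> k \<and> f j < i}" by blast
    let ?X = "{j. j \<le> k \<and> P j > r}"
    have "t i \<noteq> 0"
    proof
      assume t0: "t i = 0"
      have "?X \<noteq> {}" using c i by (metis atLeastAtMost_iff card.empty not_one_le_zero)
      then have ne: "f ` ?X \<noteq> {}" by blast
      define p where "p = Max (f ` ?X)"
      have "p \<in> f ` ?X" unfolding p_def using ne by (intro Max_in) auto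
      then obtain j2 where j2: "j2 \<in> ?X" "f j2 = p" by blast
      have pi: "p < i" using j2 Xeq by auto
      have gap: "\<forall>n\<in>f ` {0..k} - {0}. \<not> (p < n \<and> n < i)"
      proof (intro ballI notI)
        fix n assume n: "n \<in> f ` {0..k} - {0}" and "p < n \<and> n < i"
        then obtain j where j: "j \<le> k" "f j = n" by auto
        then have "j \<in> ?X" using Xeq \<open>p < n \<and> n < i\<close> by auto
        then have "n \<le> p" unfolding p_def using j by (intro Max_ge) auto
        then show False using \<open>p < n \<and> n < i\<close> by simp
      qed
      have "FF k f t p = FF k f t i" using FF_eq[where t=t and b=i and f=f and k=k and a=p] t0 gap pi by blast
      then have "P j2 = P j1"
      proof (cases "\<forall>i\<in>{1..k}. t i = 0")
        case True then show ?thesis by (simp add: P_def phi_def v0_def)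
      next
        case False
        with \<open>FF k f t p = FF k f t i\<close> show ?thesis
          unfolding P_def phi_eq[OF False] using j1 j2 by (simp add: v0_def)
      qed
      then show False using j1 j2 by auto
    qed
  }
  note bwd = this
  show "t i \<noteq> 0 \<longleftrightarrow> (\<exists>r::real. card {j. j \<le> k \<and> phi k f t j > r} = i)"
    using fwd bwd by blast
  fix r :: real and g :: "nat \<Rightarrow> nat"
  assume c0: "card {j. j \<le> k \<and> phi k f t j > r} = i"
    and gdef: "\<forall>j\<le>k. g j = (if phi k f t j \<le> r then i else 0)"
  have c: "card {j. j \<le> k \<and> P j > r} = i" using c0 unfolding P_def .
  have g: "\<And>j. j \<le> k \<Longrightarrow> g j = (if P j \<le> r then i else 0)" using gdef unfolding P_def by blast
  from K[OF c] obtain j1 where j1: "j1 \<le> k" "\<not> P j1 > r" "f j1 = i"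
    and Xeq: "{j. j \<le> k \<and> P j > r} = {j. j \<le> k \<and> f j < i}" by blast
  have ggt: "{l. l \<le> k \<and> g l < i} = {j. j \<le> k \<and> P j > r}"
    using g i by (auto split: if_splits)
  show "is_placing k g"
    unfolding is_placing_def
  proof (intro allI impI conjI)
    fix j assume j: "j \<le> k"
    show "g j \<le> k" using g[OF j] i by auto
    show "g j = card {l. l \<le> k \<and> g l < g j}"
    proof (cases "P j \<le> r")
      case True then show ?thesis using g[OF j] ggt c by simp
    next
      case False then show ?thesis using g[OF j] by simp
    qed
  qed
  {
    fix l assume l: "l \<in> {1..k}"
    show "height k g l = (if l = i then 1 else 0)"
    proof (cases "l = i")
      case True
      have "g j1 = i" using g[OF j1(1)] j1 by simp
      then show ?thesis using True j1 unfolding height_def by auto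
    next
      case False
      have "\<not> (\<exists>j\<le>k. g j = l)" using g False l by auto
      then show ?thesis using False unfolding height_def by auto
    qed
  }
  show "placing_le k g f"
    unfolding placing_le_def
  proof (intro allI impI)
    fix j assume j: "j \<le> k"
    show "g j \<le> f j"
    proof (cases "P j \<le> r")
      case True
      then have "j \<notin> {j. j \<le> k \<and> P j > r}" by auto
      then have "\<not> f j < i" using Xeq j by auto
      then show ?thesis using g[OF j] True by simp
    next
      case False then show ?thesis using g[OF j] by simp
    qed
  qed
qed

end
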